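(* In the setting of the flag $\mathcal{F}=(\mathcal{F}_1,\dots,\mathcal{F}_r)$, $r\ge2$, with $\mathcal{F}_i=\bigoplus_{j=0}^{s_i-1}\mathbb{F}_{q^m}\alpha^{lj}$ and $1\le s_1<\dots<s_r<s=n/m$, assume $L=s$. Then: (1) $\mathcal{F}$ is a generalized Galois flag (so $\mathrm{Orb}(\mathcal{F})$ is a generalized Galois flag code) if and only if $s_1=1$. (2) If $r=2$, $s_1=1$ and $s_2=L-1$, then $\mathrm{Orb}(\mathcal{F})$ is an optimum distance generalized Galois flag code of type $(m,n-m)$ (distance $4m$) with cardinality $\frac{q^n-1}{q^m-1}$, the largest possible for cyclic orbit flag codes with best friend $\mathbb{F}_{q^m}$.
   Context: $q$ prime power; $m$ divides $n$; $\alpha$ is a primitive element of $\mathbb{F}_{q^n}$; $l$ is an integer with $1\le l<\frac{q^n-1}{q^m-1}$; $L$ is the degree of the minimal polynomial of $\alpha^l$ over $\mathbb{F}_{q^m}$. Subspaces are $\mathbb{F}_q$-subspaces of $\mathbb{F}_{q^n}$; a flag is a chain $\{0\}\subsetneq\mathcal{F}_1\subsetneq\cdots\subsetneq\mathcal{F}_r\subsetneq\mathbb{F}_{q^n}$ with type its vector of dimensions. $d_S(\mathcal{U},\mathcal{V})=\dim(\mathcal{U}+\mathcal{V})-\dim(\mathcal{U}\cap\mathcal{V})$, $d_f(\mathcal{F},\mathcal{F}')=\sum_i d_S(\mathcal{F}_i,\mathcal{F}'_i)$, $\mathrm{Orb}(\mathcal{F})=\{\mathcal{F}\alpha^j:j\ge0\}$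 with $\mathcal{F}\alpha^j=(\mathcal{F}_1\alpha^j,\dots)$, and the minimum distance of a code is the minimum $d_f$ between distinct codewords. A flag code of type $(t_1,\dots,t_r)$ is an optimum distance flag code if its minimum distance equals $2(\sum_{t_i\le\lfloor n/2\rfloor}t_i+\sum_{t_i>\lfloor n/2\rfloor}(n-t_i))$. A generalized Galois flag is a flag having at least one subspace that is a subfield of $\mathbb{F}_{q^n}$ and at least one subspace that is not a subfield, such that its subspaces that are subfields form a chain of subfields (a Galois subflag). *)

theory Defs
  imports "HOL-Computational_Algebra.Polynomial" "HOL-Computational_Algebra.Primes"
begin

definition prime_power :: "nat \<Rightarrow> bool" where
  "prime_power q \<longleftrightarrow> (\<exists>p k. prime p \<and> k > 0 \<and> q = p ^ k)"

text \<open>Inside a field with q^n elements, the subfield with q^k elements (k dvd n).\<close>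
definition Fsub :: "nat \<Rightarrow> nat \<Rightarrow> 'a::field set" where
  "Fsub q k = {x. x ^ (q ^ k) = x}"

definition is_subfield :: "'a::field set \<Rightarrow> bool" where
  "is_subfield K \<longleftrightarrow> 0 \<in> K \<and> 1 \<in> K \<and> (\<forall>x\<in>K. \<forall>y\<in>K. x + y \<in> K \<and> x * y \<in> K)
     \<and> (\<forall>x\<in>K. - x \<in> K \<and> inverse x \<in> K)"

definition primitive_elem :: "'a::field \<Rightarrow> bool" where
  "primitive_elem a \<longleftrightarrow> range (\<lambda>k::nat. a ^ k) = UNIV - {0}"

definition minpoly_degree :: "'a::field set \<Rightarrow> 'a \<Rightarrow> nat" where
  "minpoly_degree K b = (LEAST d. \<exists>p. p \<noteq> 0 \<and> (\<forall>i. coeff p i \<in> K) \<and> poly p b = 0 \<and> degree p = d)"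

definition is_subspace :: "nat \<Rightarrow> 'a::field set \<Rightarrow> bool" where
  "is_subspace q V \<longleftrightarrow> 0 \<in> V \<and> (\<forall>u\<in>V. \<forall>v\<in>V. u + v \<in> V) \<and> (\<forall>c\<in>Fsub q 1. \<forall>v\<in>V. c * v \<in> V)"

definition sdim :: "nat \<Rightarrow> 'a set \<Rightarrow> nat" where
  "sdim q V = (THE k. card V = q ^ k)"

definition ssum :: "'a::plus set \<Rightarrow> 'a set \<Rightarrow> 'a set" where
  "ssum U V = {u + v | u v. u \<in> U \<and> v \<in> V}"

definition subspace_dist :: "nat \<Rightarrow> 'a::plus set \<Rightarrow> 'a set \<Rightarrow> nat" where
  "subspace_dist q U V = sdim q (ssum U V) - sdim q (U \<inter> V)"

definition is_flag :: "nat \<Rightarrow> 'a::field set list \<Rightarrow> bool" where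
  "is_flag q F \<longleftrightarrow> F \<noteq> [] \<and> (\<forall>V\<in>set F. is_subspace q V) \<and> {0} \<subset> hd F \<and> last F \<subset> UNIV
     \<and> sorted_wrt (\<subset>) F"

definition flag_type :: "nat \<Rightarrow> 'a set list \<Rightarrow> nat list" where
  "flag_type q F = map (sdim q) F"

definition flag_dist :: "nat \<Rightarrow> 'a::plus set list \<Rightarrow> 'a set list \<Rightarrow> nat" where
  "flag_dist q F G = (\<Sum>i<length F. subspace_dist q (F ! i) (G ! i))"

definition min_dist :: "nat \<Rightarrow> 'a::plus set list set \<Rightarrow> nat" where
  "min_dist q C = Min {flag_dist q F G | F G. F \<in> C \<and> G \<in> C \<and> F \<noteq> G}"

definition Orb :: "'a::field \<Rightarrow> 'a set list \<Rightarrow> 'a set list set" where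
  "Orb a F = {map (\<lambda>V. (\<lambda>x. x * a ^ j) ` V) F | j::nat. True}"

definition odfc_bound :: "nat \<Rightarrow> nat list \<Rightarrow> nat" where
  "odfc_bound n ts = 2 * sum_list (map (\<lambda>t. if t \<le> n div 2 then t else n - t) ts)"

definition optimum_distance_flag_code :: "nat \<Rightarrow> nat \<Rightarrow> 'a::plus set list set \<Rightarrow> nat list \<Rightarrow> bool" where
  "optimum_distance_flag_code q n C ts \<longleftrightarrow>
     (\<forall>F\<in>C. flag_type q F = ts) \<and> min_dist q C = odfc_bound n ts"

definition gen_galois_flag :: "nat \<Rightarrow> 'a::field set list \<Rightarrow> bool" where
  "gen_galois_flag q F \<longleftrightarrow> is_flag q F \<and> (\<exists>V\<in>set F. is_subfield V) \<and> (\<exists>V\<in>set F. \<not> is_subfield V)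
     \<and> (\<forall>U\<in>set F. \<forall>V\<in>set F. is_subfield U \<and> is_subfield V \<longrightarrow> U \<subseteq> V \<or> V \<subseteq> U)"

definition best_friend :: "'a::field set \<Rightarrow> 'a set list \<Rightarrow> bool" where
  "best_friend K F \<longleftrightarrow> is_subfield K \<and> (\<forall>V\<in>set F. \<forall>k\<in>K. \<forall>v\<in>V. k * v \<in> V)
     \<and> (\<forall>K'. is_subfield K' \<and> (\<forall>V\<in>set F. \<forall>k\<in>K'. \<forall>v\<in>V. k * v \<in> V) \<longrightarrow> K' \<subseteq> K)"

definition pow_span :: "'a::field set \<Rightarrow> 'a \<Rightarrow> nat \<Rightarrow> nat \<Rightarrow> 'a set" where
  "pow_span K a l si = {\<Sum>j<si. c j * a ^ (l * j) | c. \<forall>j. c j \<in> K}"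

definition the_flag :: "nat \<Rightarrow> nat \<Rightarrow> 'a::field \<Rightarrow> nat \<Rightarrow> nat list \<Rightarrow> 'a set list" where
  "the_flag q m a l ss = map (pow_span (Fsub q m) a l) ss"

end

theory Submission
  imports Defs "HOL-Number_Theory.Residues"
begin


lemma card_ssum_inter:
  fixes U V :: "'a::ab_group_add set"
  assumes fU: "finite U" and fV: "finite V"
    and U: "\<And>x y. x \<in> U \<Longrightarrow> y \<in> U \<Longrightarrow> x + y \<in> U" "\<And>x. x \<in> U \<Longrightarrow> - x \<in> U"
    and V: "\<And>x y. x \<in> V \<Longrightarrow> y \<in> V \<Longrightarrow> x + y \<in> V" "\<And>x. x \<in> V \<Longrightarrow> - x \<in> V"
  shows "card (ssum U V) * card (U \<inter> V) = card U * card V"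
proof -
  define fib where "fib x = {(u,v). u \<in> U \<and> v \<in> V \<and> u + v = x}" for x
  have un: "U \<times> V = (\<Union>x\<in>ssum U V. fib x)"
    unfolding fib_def ssum_def by auto
  have fS: "finite (ssum U V)"
  proof -
    have "ssum U V = (\<lambda>(u,v). u + v) ` (U \<times> V)" unfolding ssum_def by auto
    thus ?thesis using fU fV by simp
  qed
  have ffib: "finite (fib x)" for x
    by (rule finite_subset[of _ "U \<times> V"]) (auto simp: fib_def intro: fU fV)
  have cf: "card (fib x) = card (U \<inter> V)" if "x \<in> ssum U V" for x
  proof -
    from that obtain u0 v0 where u0: "u0 \<in> U" and v0: "v0 \<in> V" and x: "x = u0 + v0"
      unfolding ssum_def by auto
    have "fib x = (\<lambda>d. (u0 + d, v0 - d)) ` (U \<inter> V)"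
    proof (rule subset_antisym; rule subsetI)
      fix z assume "z \<in> fib x"
      then obtain u v where z: "z = (u,v)" "u \<in> U" "v \<in> V" "u + v = x" unfolding fib_def by auto
      have "u - u0 \<in> U" using U z u0 by (metis diff_conv_add_uminus)
      moreover have "u - u0 = v0 - v" using z x by (simp add: algebra_simps)
      moreover have "v0 - v \<in> V" using V z v0 by (metis diff_conv_add_uminus)
      ultimately have "u - u0 \<in> U \<inter> V" by simp
      moreover have "z = (\<lambda>d. (u0 + d, v0 - d)) (u - u0)"
        using z x by (simp add: algebra_simps)
      ultimately show "z \<in> (\<lambda>d. (u0 + d, v0 - d)) ` (U \<inter> V)" by (rule rev_image_eqI)
    next
      fix z assume "z \<in> (\<lambda>d. (u0 + d, v0 - d)) ` (U \<inter> V)"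
      then obtain d where d: "d \<in> U" "d \<in> V" "z = (u0 + d, v0 - d)" by auto
      have "v0 - d \<in> V" using V d v0 by (metis diff_conv_add_uminus)
      thus "z \<in> fib x" using d U u0 x unfolding fib_def by (auto simp: algebra_simps)
    qed
    moreover have "inj_on (\<lambda>d. (u0 + d, v0 - d)) (U \<inter> V)" by (auto intro: inj_onI)
    ultimately show ?thesis by (simp add: card_image)
  qed
  have "card U * card V = card (U \<times> V)" by (simp add: card_cartesian_product)
  also have "\<dots> = (\<Sum>x\<in>ssum U V. card (fib x))"
    unfolding un by (rule card_UN_disjoint) (use fS ffib in \<open>auto simp: fib_def\<close>)
  also have "\<dots> = (\<Sum>x\<in>ssum U V. card (U \<inter> V))" using cf by simp
  finally show ?thesis by simp
qed

locale fset =
  fixes a :: "'a::{finite,field}" and q n m l :: nat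
  assumes pp: "prime_power q" and npos: "n > 0" and mpos: "m > 0" and mdvd: "m dvd n"
    and cardU: "card (UNIV::'a set) = q ^ n" and prim: "primitive_elem a"
    and mind: "minpoly_degree (Fsub q m) (a ^ l) = n div m"
begin

abbreviation "K \<equiv> (Fsub q m :: 'a set)"
abbreviation "Q \<equiv> q ^ m"
abbreviation "N \<equiv> q ^ n - 1"
abbreviation "s \<equiv> n div m"
abbreviation "b \<equiv> a ^ l"
abbreviation "T \<equiv> N div (Q - 1)"

lemma q2: "q \<ge> 2"
proof -
  obtain p k where "prime p" "k > 0" "q = p ^ k" using pp unfolding prime_power_def by auto
  moreover have "p \<ge> 2" using \<open>prime p\<close> prime_ge_2_nat by blast
  ultimately show ?thesis using self_le_power[of p k] by linarith
qed

lemma Q2: "Q \<ge> 2"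
  using q2 mpos self_le_power[of q m] by linarith

lemma n_eq: "n = m * s" using mdvd by simp

lemma frob: "(x + y :: 'a) ^ (q ^ j) = x ^ (q ^ j) + y ^ (q ^ j)"
proof -
  obtain p k where p: "prime p" "k > 0" "q = p ^ k" using pp unfolding prime_power_def by auto
  have cp: "CHAR('a) > 0" by (rule finite_imp_CHAR_pos) simp
  have pc: "prime CHAR('a)" using cp prime_CHAR_semidom by blast
  have "CHAR('a) dvd card (UNIV :: 'a set)" by (rule CHAR_dvd_CARD)
  hence "CHAR('a) dvd p ^ (k * n)" using cardU p by (simp add: power_mult)
  hence "CHAR('a) dvd p" using pc prime_dvd_power by blast
  hence cpe: "CHAR('a) = p" using pc p(1) by (simp add: primes_dvd_imp_eq)
  have "q ^ j = CHAR('a) ^ (k * j)" using p cpe by (simp add: power_mult)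
  thus ?thesis using freshmans_dream'[OF pc] by blast
qed


lemma frob_neg: "(- x :: 'a) ^ (q ^ j) = - (x ^ (q ^ j))"
proof -
  have "(x + - x) ^ (q ^ j) = x ^ (q ^ j) + (- x) ^ (q ^ j)" by (rule frob)
  moreover have "(0::'a) ^ (q ^ j) = 0" using q2 by simp
  ultimately have "x ^ (q ^ j) + (- x) ^ (q ^ j) = 0" by simp
  thus ?thesis by (metis add_eq_0_iff)
qed

lemma K_0: "0 \<in> K" using q2 by (simp add: Fsub_def)
lemma K_1: "1 \<in> K" by (simp add: Fsub_def)
lemma K_add: "x \<in> K \<Longrightarrow> y \<in> K \<Longrightarrow> x + y \<in> K"
  unfolding Fsub_def using frob[of x y m] by simp
lemma K_mult: "x \<in> K \<Longrightarrow> y \<in> K \<Longrightarrow> x * y \<in> K" by (simp add: Fsub_def power_mult_distrib)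
lemma K_neg: "x \<in> K \<Longrightarrow> - x \<in> K"
  unfolding Fsub_def using frob_neg[of x m] by simp
lemma K_diff: "x \<in> K \<Longrightarrow> y \<in> K \<Longrightarrow> x - y \<in> K" using K_add K_neg by (metis diff_conv_add_uminus)
lemma K_inv: "x \<in> K \<Longrightarrow> inverse x \<in> K" by (simp add: Fsub_def power_inverse)
lemma K_sub: "is_subfield K" unfolding is_subfield_def by (simp add: K_0 K_1 K_add K_mult K_neg K_inv)
lemma Fq_K: "Fsub q 1 \<subseteq> (K :: 'a set)"
proof
  fix x :: 'a assume "x \<in> Fsub q 1"
  hence x: "x ^ q = x" by (simp add: Fsub_def)
  have "x ^ (q ^ j) = x" for j by (induction j) (auto simp: power_mult x)
  thus "x \<in> K" by (simp add: Fsub_def)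
qed

lemma a_nz: "a \<noteq> 0"
proof -
  have "a ^ 1 \<in> range (\<lambda>k::nat. a ^ k)" by blast
  thus ?thesis using prim unfolding primitive_elem_def by auto
qed

lemma nz_pow: "x \<noteq> 0 \<Longrightarrow> \<exists>k. x = a ^ k"
  using prim unfolding primitive_elem_def by (metis DiffI UNIV_I imageE singletonD)

end


context fset begin

lemma a_ord_ex: "\<exists>d>0. a ^ d = 1"
proof -
  have "\<not> inj (\<lambda>k::nat. a ^ k)"
  proof
    assume "inj (\<lambda>k::nat. a ^ k)"
    hence "finite (UNIV :: nat set)" by (rule finite_imageD[OF finite_subset[OF subset_UNIV finite_UNIV]])
    thus False by simp
  qed
  then obtain i j :: nat where ij: "i \<noteq> j" "a ^ i = a ^ j" unfolding inj_def by auto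
  have *: "\<exists>d>0. a ^ d = 1" if "i < j" "a ^ i = a ^ j" for i j
  proof -
    have "a ^ j = a ^ i * a ^ (j - i)" using that(1) by (simp flip: power_add)
    hence "a ^ (j - i) = 1" using that a_nz by simp
    thus ?thesis using that by (intro exI[of _ "j - i"]) auto
  qed
  show ?thesis using ij *[of i j] *[of j i] by (cases "i < j") auto
qed

definition "dd = (LEAST d. d > 0 \<and> a ^ d = 1)"

lemma dd: "dd > 0" "a ^ dd = 1"
  using LeastI_ex[OF a_ord_ex] unfolding dd_def by auto

lemma dd_min: "0 < e \<Longrightarrow> e < dd \<Longrightarrow> a ^ e \<noteq> 1"
  using not_less_Least unfolding dd_def by blast

lemma pow_mod_dd: "a ^ e = a ^ (e mod dd)"
proof -
  have "a ^ e = a ^ (dd * (e div dd) + e mod dd)" by simp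
  also have "\<dots> = (a ^ dd) ^ (e div dd) * a ^ (e mod dd)" by (simp only: power_add power_mult)
  finally show ?thesis using dd by simp
qed

lemma dd_inj: "inj_on (\<lambda>k. a ^ k) {..<dd}"
proof (rule inj_onI)
  have *: "False" if "i < j" "j < dd" "a ^ i = a ^ j" for i j
  proof -
    have "a ^ j = a ^ i * a ^ (j - i)" using that(1) by (simp flip: power_add)
    hence "a ^ (j - i) = 1" using that a_nz by simp
    thus False using dd_min[of "j - i"] that by auto
  qed
  fix i j assume "i \<in> {..<dd}" "j \<in> {..<dd}" "a ^ i = a ^ j"
  thus "i = j" using *[of i j] *[of j i] by (cases i j rule: linorder_cases) auto
qed

lemma dd_eq: "dd = N"
proof -
  have "range (\<lambda>k::nat. a ^ k) = (\<lambda>k. a ^ k) ` {..<dd}"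
  proof (intro subset_antisym subsetI)
    fix x assume "x \<in> range (\<lambda>k::nat. a ^ k)"
    then obtain k where "x = a ^ k" by blast
    hence "x = a ^ (k mod dd)" using pow_mod_dd[of k] by simp
    moreover have "k mod dd \<in> {..<dd}" using dd(1) by simp
    ultimately show "x \<in> (\<lambda>k. a ^ k) ` {..<dd}" by blast
  qed auto
  hence "card (range (\<lambda>k::nat. a ^ k)) = dd" using dd_inj by (simp add: card_image)
  moreover have "card (UNIV - {0::'a}) = N" using cardU by (simp add: card_Diff_singleton)
  ultimately show ?thesis using prim unfolding primitive_elem_def by simp
qed

lemma N_pos: "N > 0" using dd dd_eq by simp

lemma a_ord: "a ^ e = 1 \<longleftrightarrow> N dvd e"
proof
  assume "a ^ e = 1"
  hence "a ^ (e mod dd) = 1" using pow_mod_dd[of e] by simp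
  hence "e mod dd = 0" using dd_min[of "e mod dd"] dd(1) by (cases "e mod dd = 0") auto
  thus "N dvd e" using dd_eq by auto
next
  assume "N dvd e" thus "a ^ e = 1" using pow_mod_dd[of e] dd_eq by simp
qed

lemma a_inj: "inj_on (\<lambda>k. a ^ k) {..<N}" using dd_inj dd_eq by simp

end


context fset begin

definition "QQ = q ^ m"
definition "NN = q ^ n - 1"
definition "TT = NN div (QQ - 1)"
definition "KK = (Fsub q m :: 'a set)"

lemma QQ2: "QQ \<ge> 2" using Q2 QQ_def by simp
lemma NN_pos: "NN > 0" using N_pos NN_def by simp
lemma a_ord': "a ^ e = 1 \<longleftrightarrow> NN dvd e" using a_ord NN_def by simp
lemma a_inj': "inj_on (\<lambda>k. a ^ k) {..<NN}" using a_inj NN_def by simp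
lemma pow_mod: "a ^ e = a ^ (e mod NN)" using pow_mod_dd[of e] dd_eq NN_def by simp
lemma KK_iff: "x \<in> KK \<longleftrightarrow> x ^ QQ = x" by (simp add: KK_def QQ_def Fsub_def)

lemma Q1: "QQ - 1 > 0" "QQ = Suc (QQ - 1)" using QQ2 by auto

lemma Qm1_dvd: "(QQ - 1) dvd NN"
proof -
  define R where "R = QQ - 1"
  have e: "QQ = R + 1" using Q1 unfolding R_def by simp
  have "[R + 1 = 1] (mod R)" by (simp only: cong_def mod_add_self1)
  hence "[QQ = 1] (mod R)" using e by simp
  hence "[QQ ^ s = 1 ^ s] (mod R)" by (rule cong_pow)
  hence "R dvd QQ ^ s - 1" using cong_to_1_nat by simp
  moreover have "QQ ^ s = q ^ n"
  proof -
    have "q ^ n = q ^ (m * s)" by (rule arg_cong[OF n_eq])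
    thus ?thesis by (simp add: power_mult QQ_def)
  qed
  ultimately show ?thesis unfolding R_def NN_def by simp
qed

lemma T_eq: "TT * (QQ - 1) = NN" using Qm1_dvd unfolding TT_def by simp

lemma T_pos: "TT > 0" using T_eq NN_pos by (cases TT) auto

lemma Kmem: "a ^ k \<in> KK \<longleftrightarrow> TT dvd k"
proof -
  define R where "R = QQ - 1"
  have e: "QQ = Suc R" using Q1 unfolding R_def by simp
  have "a ^ k \<in> KK \<longleftrightarrow> a ^ (k * QQ) = a ^ k" by (simp add: KK_iff power_mult)
  also have "a ^ (k * QQ) = a ^ k * a ^ (k * R)" unfolding e by (simp add: power_add)
  also have "(a ^ k * a ^ (k * R) = a ^ k) \<longleftrightarrow> a ^ (k * R) = 1"
    using a_nz by simp
  also have "\<dots> \<longleftrightarrow> NN dvd k * R" by (rule a_ord')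
  also have "NN = TT * R" using T_eq unfolding R_def by simp
  also have "TT * R dvd k * R \<longleftrightarrow> TT dvd k" using Q1(1) unfolding R_def by simp
  finally show ?thesis .
qed

lemma KK_0: "0 \<in> KK" using K_0 KK_def by simp
lemma KK_1: "1 \<in> KK" using K_1 KK_def by simp

lemma card_K: "card KK = QQ"
proof -
  have "KK = insert 0 ((\<lambda>t. a ^ (TT * t)) ` {..<QQ - 1})"
  proof (intro Set.set_eqI iffI)
    fix x assume x: "x \<in> KK"
    show "x \<in> insert 0 ((\<lambda>t. a ^ (TT * t)) ` {..<QQ - 1})"
    proof (cases "x = 0")
      case False
      then obtain k where k: "x = a ^ k" using nz_pow by blast
      have xk: "x = a ^ (k mod NN)" using k pow_mod[of k] by simp
      have "a ^ (k mod NN) \<in> KK" using x xk by simp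
      hence "TT dvd k mod NN" using Kmem by blast
      then obtain t where t: "k mod NN = TT * t" by blast
      have "k mod NN < NN" using NN_pos by simp
      hence "TT * t < TT * (QQ - 1)" unfolding t T_eq .
      hence "t < QQ - 1" by simp
      moreover have "x = a ^ (TT * t)" using xk t by simp
      ultimately show ?thesis by blast
    qed simp
  next
    fix x assume "x \<in> insert 0 ((\<lambda>t. a ^ (TT * t)) ` {..<QQ - 1})"
    hence "x = 0 \<or> (\<exists>t. x = a ^ (TT * t))" by blast
    moreover have "a ^ (TT * t) \<in> KK" for t by (subst Kmem) simp
    ultimately show "x \<in> KK" using KK_0 by blast
  qed
  moreover have "0 \<notin> (\<lambda>t. a ^ (TT * t)) ` {..<QQ - 1}" using a_nz by auto
  moreover have "inj_on (\<lambda>t. a ^ (TT * t)) {..<QQ - 1}"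
  proof (rule inj_onI)
    fix i j assume i: "i \<in> {..<QQ - 1}" and j: "j \<in> {..<QQ - 1}" and e: "a ^ (TT * i) = a ^ (TT * j)"
    have "TT * i < TT * (QQ - 1)" "TT * j < TT * (QQ - 1)" using i j T_pos by auto
    hence "TT * i < NN" "TT * j < NN" unfolding T_eq .
    hence "TT * i = TT * j" using a_inj' e by (auto dest: inj_onD)
    thus "i = j" using T_pos by simp
  qed
  ultimately show ?thesis using QQ2 by (simp add: card_image)
qed

end


context fset begin

lemma KK_add: "x \<in> KK \<Longrightarrow> y \<in> KK \<Longrightarrow> x + y \<in> KK" using K_add KK_def by simp
lemma KK_mult: "x \<in> KK \<Longrightarrow> y \<in> KK \<Longrightarrow> x * y \<in> KK" using K_mult KK_def by simp
lemma KK_neg: "x \<in> KK \<Longrightarrow> - x \<in> KK" using K_neg KK_def by simp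
lemma KK_diff: "x \<in> KK \<Longrightarrow> y \<in> KK \<Longrightarrow> x - y \<in> KK" using K_diff KK_def by simp
lemma KK_inv: "x \<in> KK \<Longrightarrow> inverse x \<in> KK" using K_inv KK_def by simp
lemma KK_sub: "is_subfield KK" using K_sub KK_def by simp
lemma Fq_KK: "Fsub q 1 \<subseteq> KK" using Fq_K KK_def by simp

lemma indep:
  assumes "p \<noteq> 0" "\<forall>i. Polynomial.coeff p i \<in> KK" "poly p b = 0"
  shows "s \<le> degree p"
proof -
  have "minpoly_degree (Fsub q m) b \<le> degree p"
    unfolding minpoly_degree_def by (rule Least_le) (use assms KK_def in auto)
  thus ?thesis using mind by simp
qed

lemma uniq:
  assumes t: "t \<le> s" and c: "\<forall>j<t. c j \<in> KK" and d: "\<forall>j<t. d j \<in> KK"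
    and e: "(\<Sum>j<t. c j * b ^ j) = (\<Sum>j<t. d j * b ^ j)" and j: "j < t"
  shows "c j = d j"
proof -
  define p where "p = (\<Sum>i<t. Polynomial.monom (c i - d i) i)"
  have cp: "Polynomial.coeff p i = (if i < t then c i - d i else 0)" for i
    unfolding p_def coeff_sum by (simp add: Polynomial.coeff_monom)
  have "poly p b = (\<Sum>i<t. (c i - d i) * b ^ i)"
    unfolding p_def poly_sum by (simp add: poly_monom)
  also have "\<dots> = (\<Sum>i<t. c i * b ^ i) - (\<Sum>i<t. d i * b ^ i)"
    by (simp add: algebra_simps sum_subtractf)
  finally have pb: "poly p b = 0" using e by simp
  have "p = 0"
  proof (rule ccontr)
    assume "p \<noteq> 0"
    moreover have "\<forall>i. Polynomial.coeff p i \<in> KK" using c d cp KK_diff KK_0 by auto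
    ultimately have "s \<le> degree p" using indep pb by blast
    moreover have "degree p \<le> t - 1" by (rule degree_le) (auto simp: cp)
    ultimately show False using t j by linarith
  qed
  hence "Polynomial.coeff p j = 0" by simp
  thus ?thesis using cp j by simp
qed

abbreviation "P t \<equiv> pow_span (Fsub q m) a l t"

lemma P_alt: "P t = {\<Sum>j<t. c j * b ^ j | c. \<forall>j. c j \<in> KK}"
  unfolding pow_span_def KK_def by (simp add: power_mult)

lemma P_intro: "(\<forall>j. c j \<in> KK) \<Longrightarrow> x = (\<Sum>j<t. c j * b ^ j) \<Longrightarrow> x \<in> P t"
  unfolding P_alt by blast

lemma P_0: "0 \<in> P t"
  unfolding P_alt using KK_0 by (auto intro!: exI[of _ "\<lambda>_. 0"])

lemma P_add: "x \<in> P t \<Longrightarrow> y \<in> P t \<Longrightarrow> x + y \<in> P t"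
proof -
  assume "x \<in> P t" "y \<in> P t"
  then obtain c d where c: "\<forall>j. c j \<in> KK" "x = (\<Sum>j<t. c j * b ^ j)"
    and d: "\<forall>j. d j \<in> KK" "y = (\<Sum>j<t. d j * b ^ j)" unfolding P_alt by blast
  have "x + y = (\<Sum>j<t. (c j + d j) * b ^ j)" using c d by (simp add: sum.distrib algebra_simps)
  moreover have "\<forall>j. c j + d j \<in> KK" using c d KK_add by blast
  ultimately show ?thesis by (intro P_intro[of "\<lambda>j. c j + d j"]) auto
qed

lemma P_smul: "k \<in> KK \<Longrightarrow> x \<in> P t \<Longrightarrow> k * x \<in> P t"
proof -
  assume k: "k \<in> KK" and "x \<in> P t"
  then obtain c where c: "\<forall>j. c j \<in> KK" "x = (\<Sum>j<t. c j * b ^ j)" unfolding P_alt by blast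
  have "k * x = (\<Sum>j<t. (k * c j) * b ^ j)" using c by (simp add: sum_distrib_left mult.assoc)
  moreover have "\<forall>j. k * c j \<in> KK" using c k KK_mult by blast
  ultimately show ?thesis by (intro P_intro[of "\<lambda>j. k * c j"]) auto
qed

lemma P_neg: "x \<in> P t \<Longrightarrow> - x \<in> P t"
  using P_smul[of "-1" x t] KK_neg[OF KK_1] by simp

lemma P_mono: "t \<le> t' \<Longrightarrow> P t \<subseteq> P t'"
proof
  fix x assume tt: "t \<le> t'" and "x \<in> P t"
  then obtain c where c: "\<forall>j. c j \<in> KK" "x = (\<Sum>j<t. c j * b ^ j)" unfolding P_alt by blast
  define c' where "c' j = (if j < t then c j else 0)" for j
  have "(\<Sum>j<t'. c' j * b ^ j) = (\<Sum>j<t. c' j * b ^ j)"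
    by (rule sum.mono_neutral_right) (use tt in \<open>auto simp: c'_def\<close>)
  also have "\<dots> = x" using c by (simp add: c'_def)
  finally have "x = (\<Sum>j<t'. c' j * b ^ j)" ..
  moreover have "\<forall>j. c' j \<in> KK" using c KK_0 by (simp add: c'_def)
  ultimately show "x \<in> P t'" by (intro P_intro[of c']) auto
qed

lemma P_pow: "t < t' \<Longrightarrow> b ^ t \<in> P t'"
proof -
  assume tt: "t < t'"
  define c where "c j = (if j = t then 1 else (0::'a))" for j
  have "(\<Sum>j<t'. c j * b ^ j) = (\<Sum>j<t'. if j = t then b ^ j else 0)"
    by (rule sum.cong) (auto simp: c_def)
  also have "\<dots> = b ^ t" using tt by simp
  finally have "(\<Sum>j<t'. c j * b ^ j) = b ^ t" .
  moreover have "\<forall>j. c j \<in> KK" using KK_0 KK_1 by (simp add: c_def)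
  ultimately show ?thesis by (intro P_intro[of c]) auto
qed

lemma P_notin: "t < s \<Longrightarrow> b ^ t \<notin> P t"
proof
  assume ts: "t < s" and "b ^ t \<in> P t"
  then obtain c where c: "\<forall>j. c j \<in> KK" "b ^ t = (\<Sum>j<t. c j * b ^ j)" unfolding P_alt by blast
  define c' where "c' j = (if j < t then c j else 0)" for j
  define e where "e j = (if j = t then 1 else (0::'a))" for j
  have "(\<Sum>j<Suc t. c' j * b ^ j) = (\<Sum>j<t. c j * b ^ j)" by (simp add: c'_def)
  also have "\<dots> = b ^ t" using c by simp
  also have "b ^ t = (\<Sum>j<Suc t. if j = t then b ^ j else 0)" by simp
  also have "\<dots> = (\<Sum>j<Suc t. e j * b ^ j)" by (rule sum.cong) (auto simp: e_def)
  finally have "c' t = e t"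
    by (rule uniq[rotated 3]) (use ts c KK_0 KK_1 in \<open>auto simp: c'_def e_def\<close>)
  thus False by (simp add: c'_def e_def)
qed

lemma P_1: "P 1 = KK"
  unfolding P_alt using KK_0 by (auto intro!: exI[of _ "\<lambda>_. _"])



lemma card_P: "t \<le> s \<Longrightarrow> card (P t) = QQ ^ t"
proof -
  assume ts: "t \<le> s"
  define f where "f c = (\<Sum>j<t. c j * b ^ j)" for c :: "nat \<Rightarrow> 'a"
  have eq: "P t = f ` (PiE {..<t} (\<lambda>_. KK))"
  proof (intro Set.set_eqI iffI)
    fix x assume "x \<in> P t"
    then obtain c where c: "\<forall>j. c j \<in> KK" "x = (\<Sum>j<t. c j * b ^ j)" unfolding P_alt by blast
    have "restrict c {..<t} \<in> PiE {..<t} (\<lambda>_. KK)" using c by auto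
    moreover have "x = f (restrict c {..<t})" unfolding f_def c by (rule sum.cong) auto
    ultimately show "x \<in> f ` (PiE {..<t} (\<lambda>_. KK))" by blast
  next
    fix x assume "x \<in> f ` (PiE {..<t} (\<lambda>_. KK))"
    then obtain c where c: "c \<in> PiE {..<t} (\<lambda>_. KK)" "x = f c" by blast
    define c' where "c' j = (if j < t then c j else 0)" for j
    have "\<forall>j. c' j \<in> KK" using c KK_0 by (auto simp: c'_def)
    moreover have "x = (\<Sum>j<t. c' j * b ^ j)" unfolding c f_def by (rule sum.cong) (auto simp: c'_def)
    ultimately show "x \<in> P t" by (rule P_intro)
  qed
  have inj: "inj_on f (PiE {..<t} (\<lambda>_. KK))"
  proof (rule inj_onI)
    fix c d assume c: "c \<in> PiE {..<t} (\<lambda>_. KK)" and d: "d \<in> PiE {..<t} (\<lambda>_. KK)" and e: "f c = f d"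
    show "c = d"
    proof (rule PiE_ext[OF c d])
      fix j assume "j \<in> {..<t}"
      thus "c j = d j" using uniq[OF ts, of c d j] c d e unfolding f_def by auto
    qed
  qed
  have "card (P t) = card (PiE {..<t} (\<lambda>_. KK))" unfolding eq using inj by (rule card_image)
  also have "\<dots> = QQ ^ t" by (simp add: card_PiE card_K)
  finally show ?thesis .
qed

lemma P_sub_iff: "1 \<le> t \<Longrightarrow> t < s \<Longrightarrow> is_subfield (P t) \<longleftrightarrow> t = 1"
proof
  assume t: "1 \<le> t" "t < s" and sf: "is_subfield (P t)"
  show "t = 1"
  proof (rule ccontr)
    assume "t \<noteq> 1"
    hence "1 < t" using t by simp
    hence "b ^ 1 \<in> P t" "b ^ (t - 1) \<in> P t" using P_pow[of 1 t] P_pow[of "t - 1" t] by auto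
    hence "b ^ (t - 1) * b ^ 1 \<in> P t" using sf unfolding is_subfield_def by blast
    moreover have "b ^ (t - 1) * b ^ 1 = b ^ t" using \<open>1 < t\<close> by (metis power_add le_add_diff_inverse2 less_imp_le)
    ultimately show False using P_notin t by simp
  qed
next
  assume "t = 1" thus "is_subfield (P t)" using P_1 KK_sub by simp
qed

lemma P_subspace: "is_subspace q (P t)"
  unfolding is_subspace_def using P_0 P_add P_smul Fq_KK by blast

lemma P_1_mem: "1 \<le> t \<Longrightarrow> 1 \<in> P t"
  using P_pow[of 0 t] by simp



definition sc :: "'a \<Rightarrow> 'a set \<Rightarrow> 'a set" where "sc u V = (\<lambda>x. x * u) ` V"
definition "Kcl V \<longleftrightarrow> (\<forall>k\<in>KK. \<forall>v\<in>V. k * v \<in> V)"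
definition "Ksp V \<longleftrightarrow> 0 \<in> V \<and> (\<forall>x\<in>V. \<forall>y\<in>V. x + y \<in> V) \<and> Kcl V"

lemma Ksp_add: "Ksp V \<Longrightarrow> x \<in> V \<Longrightarrow> y \<in> V \<Longrightarrow> x + y \<in> V"
  by (simp add: Ksp_def)

lemma Ksp_smul: "Ksp V \<Longrightarrow> k \<in> KK \<Longrightarrow> x \<in> V \<Longrightarrow> k * x \<in> V"
  by (simp add: Ksp_def Kcl_def)

lemma Ksp_neg: "Ksp V \<Longrightarrow> x \<in> V \<Longrightarrow> - x \<in> V"
proof -
  assume "Ksp V" "x \<in> V"
  hence "(-1) * x \<in> V" using KK_neg[OF KK_1] Ksp_smul by blast
  thus ?thesis by simp
qed

lemma Ksp_diff: "Ksp V \<Longrightarrow> x \<in> V \<Longrightarrow> y \<in> V \<Longrightarrow> x - y \<in> V"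
proof -
  assume "Ksp V" "x \<in> V" "y \<in> V"
  hence "x + - y \<in> V" using Ksp_neg Ksp_add by blast
  thus ?thesis by simp
qed

lemma Ksp_P: "Ksp (P t)" unfolding Ksp_def Kcl_def using P_0[of t] P_add[of _ t] P_smul[of _ _ t] by simp
lemma Ksp_KK: "Ksp KK" using Ksp_P[of 1] P_1 by simp

lemma Ksp_sc: "Ksp V \<Longrightarrow> Ksp (sc u V)"
proof -
  assume V: "Ksp V"
  have "0 \<in> sc u V" unfolding sc_def using V Ksp_def by (intro rev_image_eqI[of 0]) auto
  moreover have "x + y \<in> sc u V" if xy: "x \<in> sc u V" "y \<in> sc u V" for x y
  proof -
    obtain x0 y0 where "x0 \<in> V" "y0 \<in> V" "x = x0 * u" "y = y0 * u" using xy unfolding sc_def by auto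
    moreover have "x0 + y0 \<in> V" using Ksp_add V calculation by blast
    ultimately show ?thesis unfolding sc_def by (intro rev_image_eqI[of "x0 + y0"]) (auto simp: distrib_right)
  qed
  moreover have "k * x \<in> sc u V" if kx: "k \<in> KK" "x \<in> sc u V" for k x
  proof -
    obtain x0 where "x0 \<in> V" "x = x0 * u" using kx unfolding sc_def by blast
    moreover have "k * x0 \<in> V" using Ksp_smul V calculation kx by blast
    ultimately show ?thesis unfolding sc_def by (intro rev_image_eqI[of "k * x0"]) (auto simp: mult.assoc)
  qed
  ultimately show ?thesis unfolding Ksp_def Kcl_def by blast
qed

lemma card_sc: "u \<noteq> 0 \<Longrightarrow> card (sc u V) = card V"
  unfolding sc_def by (rule card_image) (rule inj_onI, simp)

lemma sc_self: "(w::'a) \<noteq> 0 \<Longrightarrow> (\<forall>y\<in>V. y * w \<in> V) \<Longrightarrow> sc w V = V"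
proof -
  assume w: "w \<noteq> 0" and c: "\<forall>y\<in>V. y * w \<in> V"
  have "sc w V \<subseteq> V" using c unfolding sc_def by auto
  moreover have "card (sc w V) = card V" using card_sc w by blast
  ultimately show ?thesis by (intro card_subset_eq) auto
qed

lemma sc_inv: "(w::'a) \<noteq> 0 \<Longrightarrow> (\<forall>y\<in>V. y * w \<in> V) \<Longrightarrow> y \<in> V \<Longrightarrow> y * inverse w \<in> V"
proof -
  assume w: "w \<noteq> 0" and c: "\<forall>y\<in>V. y * w \<in> V" and y: "y \<in> V"
  hence "y \<in> sc w V" using sc_self by simp
  then obtain y0 where "y0 \<in> V" "y = y0 * w" unfolding sc_def by blast
  moreover have "y * inverse w = y0 * (w * inverse w)" using calculation by (simp add: mult.assoc)
  moreover have "w * inverse w = 1" using w by (rule right_inverse)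
  ultimately show ?thesis by (simp add: mult.assoc)
qed

lemma scale_K: "w \<in> KK \<Longrightarrow> w \<noteq> 0 \<Longrightarrow> Kcl V \<Longrightarrow> sc (w * u) V = sc u V"
proof -
  assume w: "w \<in> KK" "w \<noteq> 0" and V: "Kcl V"
  have "sc w V = V" using V w by (intro sc_self) (auto simp: Kcl_def mult.commute)
  have "sc (w * u) V = sc u (sc w V)" unfolding sc_def image_image by (simp add: mult.assoc)
  thus ?thesis using \<open>sc w V = V\<close> by simp
qed

lemma sc_mod: "Kcl V \<Longrightarrow> sc (a ^ j) V = sc (a ^ (j mod TT)) V"
proof -
  assume V: "Kcl V"
  have "a ^ j = a ^ (TT * (j div TT)) * a ^ (j mod TT)"
    by (simp flip: power_add)
  moreover have "a ^ (TT * (j div TT)) \<in> KK" by (subst Kmem) simp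
  moreover have "a ^ (TT * (j div TT)) \<noteq> 0" using a_nz by simp
  ultimately show ?thesis using scale_K V by simp
qed

lemma Orb_sc: "Orb a G = (\<lambda>j. map (sc (a ^ j)) G) ` UNIV"
  unfolding Orb_def sc_def by auto

lemma Orb_sub: "(\<forall>V\<in>set G. Kcl V) \<Longrightarrow> Orb a G \<subseteq> (\<lambda>j. map (sc (a ^ j)) G) ` {..<TT}"
proof
  fix H assume G: "\<forall>V\<in>set G. Kcl V" and "H \<in> Orb a G"
  then obtain j where H: "H = map (sc (a ^ j)) G" unfolding Orb_sc by blast
  have "H = map (sc (a ^ (j mod TT))) G" unfolding H
  proof (rule map_cong[OF refl])
    fix V assume "V \<in> set G"
    thus "sc (a ^ j) V = sc (a ^ (j mod TT)) V" using G by (intro sc_mod) auto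
  qed
  moreover have "j mod TT < TT" using T_pos by simp
  ultimately show "H \<in> (\<lambda>j. map (sc (a ^ j)) G) ` {..<TT}" by blast
qed

lemma Orb_card_le: "(\<forall>V\<in>set G. Kcl V) \<Longrightarrow> card (Orb a G) \<le> TT"
proof -
  assume "\<forall>V\<in>set G. Kcl V"
  hence "card (Orb a G) \<le> card ((\<lambda>j. map (sc (a ^ j)) G) ` {..<TT})"
    using Orb_sub by (intro card_mono) auto
  also have "\<dots> \<le> card {..<TT}" by (rule card_image_le) simp
  finally show ?thesis by simp
qed



lemma card_UNIV': "card (UNIV :: 'a set) = QQ ^ s"
proof -
  have "q ^ n = q ^ (m * s)" by (rule arg_cong[OF n_eq])
  thus ?thesis using cardU by (simp add: power_mult QQ_def)
qed

lemma sdim_eq: "card V = q ^ k \<Longrightarrow> sdim q V = k"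
  unfolding sdim_def
proof (rule the_equality)
  fix k' assume "card V = q ^ k" "card V = q ^ k'"
  thus "k' = k" using q2 by (metis Suc_1 Suc_le_lessD power_inject_exp)
qed

lemma QQ_pow: "QQ ^ t = q ^ (m * t)" by (simp add: QQ_def power_mult)

lemma ssum_Kz:
  assumes U: "Ksp U" and z: "z \<notin> U"
  shows "card (ssum U (sc z KK)) = card U * QQ"
proof -
  have z0: "z \<noteq> 0" using U z unfolding Ksp_def by auto
  have Z: "Ksp (sc z KK)" using Ksp_sc Ksp_KK by blast
  have "card (ssum U (sc z KK)) * card (U \<inter> sc z KK) = card U * card (sc z KK)"
    by (rule card_ssum_inter) (use U Z Ksp_add Ksp_neg in auto)
  moreover have "card (sc z KK) = QQ" using card_sc[OF z0] card_K by simp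
  moreover have "U \<inter> sc z KK = {0}"
  proof (intro subset_antisym subsetI)
    fix x assume x: "x \<in> U \<inter> sc z KK"
    then obtain k where k: "k \<in> KK" "x = k * z" unfolding sc_def by auto
    show "x \<in> {0}"
    proof (rule ccontr)
      assume "x \<notin> {0}"
      hence "k \<noteq> 0" using k by auto
      hence "inverse k * x = z" using k by (simp add: mult.assoc[symmetric])
      moreover have "inverse k * x \<in> U" using Ksp_smul[OF U KK_inv[OF k(1)]] x by blast
      ultimately show False using z by simp
    qed
  next
    fix x :: 'a assume "x \<in> {0}"
    thus "x \<in> U \<inter> sc z KK" using U Z unfolding Ksp_def by auto
  qed
  ultimately show ?thesis by simp
qed

abbreviation "W \<equiv> P (s - 1)"

lemma card_W: "card W = QQ ^ (s - 1)" using card_P by simp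

lemma not_closed:
  assumes s2: "s \<ge> 2" and w: "w \<notin> KK"
  shows "\<not> (\<forall>y\<in>W. y * w \<in> W)"
proof
  assume cl: "\<forall>y\<in>W. y * w \<in> W"
  have "W \<noteq> UNIV"
  proof
    assume "W = UNIV"
    hence "QQ ^ (s - 1) = QQ ^ s" using card_W card_UNIV' by simp
    moreover have "QQ ^ (s - 1) < QQ ^ s" using QQ2 s2 by (intro power_strict_increasing) auto
    ultimately show False by simp
  qed
  then obtain x0 where x0: "x0 \<notin> W" by blast
  define D where "D = insert w KK"
  have DW: "y * c \<in> W" if "c \<in> D" "y \<in> W" for c y
    using that cl P_smul[of c y "s - 1"] unfolding D_def by (auto simp: mult.commute)
  define f where "f = (\<lambda>(c, y). c * x0 + y)"
  have inj: "inj_on f (D \<times> W)"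
  proof (rule inj_onI)
    fix p1 p2 assume p1: "p1 \<in> D \<times> W" and p2: "p2 \<in> D \<times> W" and e: "f p1 = f p2"
    obtain c y where cy: "p1 = (c, y)" "c \<in> D" "y \<in> W" using p1 by auto
    obtain c' y' where cy': "p2 = (c', y')" "c' \<in> D" "y' \<in> W" using p2 by auto
    have e': "(c - c') * x0 = y' - y" using e cy cy' unfolding f_def by (simp add: algebra_simps)
    have "c = c'"
    proof (rule ccontr)
      assume ne: "c \<noteq> c'"
      have good: "\<forall>y\<in>W. y * (c - c') \<in> W"
      proof
        fix y assume "y \<in> W"
        hence "y * c - y * c' \<in> W" using DW cy cy' Ksp_diff[OF Ksp_P] by blast
        thus "y * (c - c') \<in> W" by (simp add: algebra_simps)
      qed
      have "y' - y \<in> W" using cy cy' Ksp_diff[OF Ksp_P] by blast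
      hence "(y' - y) * inverse (c - c') \<in> W" using sc_inv[of "c - c'" W] good ne by simp
      moreover have "(y' - y) * inverse (c - c') = x0" using e' ne
        by (metis diff_eq_eq divide_inverse nonzero_mult_div_cancel_left mult.commute eq_iff_diff_eq_0)
      ultimately show False using x0 by simp
    qed
    thus "p1 = p2" using e' cy cy' by simp
  qed
  have "card (D \<times> W) \<le> card (UNIV :: 'a set)"
    using card_image[OF inj] card_mono[of UNIV "f ` (D \<times> W)"] by simp
  moreover have "card D = QQ + 1" using w card_K unfolding D_def by simp
  ultimately have "(QQ + 1) * QQ ^ (s - 1) \<le> QQ ^ s" using card_W card_UNIV' by (simp add: card_cartesian_product)
  moreover have "QQ ^ s = QQ * QQ ^ (s - 1)" using s2 by (metis Suc_diff_le le_trans one_le_numeral diff_Suc_1 power_Suc Suc_1)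
  ultimately show False using QQ2 by simp
qed



lemma sc_mem: "x \<in> sc u V \<longleftrightarrow> (\<exists>y\<in>V. x = y * u)" unfolding sc_def by auto

lemma W_ne:
  assumes s2: "s \<ge> 2" and u: "u \<noteq> 0" and v: "v \<noteq> 0" and w: "u * inverse v \<notin> KK"
  shows "sc u W \<noteq> sc v W"
proof
  assume eq: "sc u W = sc v W"
  have "\<forall>y\<in>W. y * (u * inverse v) \<in> W"
  proof
    fix y assume y: "y \<in> W"
    hence "y * u \<in> sc u W" unfolding sc_def by blast
    hence "y * u \<in> sc v W" using eq by simp
    then obtain y' where y': "y' \<in> W" "y * u = y' * v" unfolding sc_def by blast
    have "y * (u * inverse v) = y' * (v * inverse v)" using y'(2) by (simp add: mult.assoc[symmetric])
    also have "\<dots> = y'" using v by simp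
    finally show "y * (u * inverse v) \<in> W" using y' by simp
  qed
  thus False using not_closed[OF s2 w] by blast
qed

lemma dist_K:
  assumes u: "u \<noteq> 0" and v: "v \<noteq> 0" and w: "u * inverse v \<notin> KK"
  shows "subspace_dist q (sc u KK) (sc v KK) = 2 * m"
proof -
  have U: "Ksp (sc u KK)" and V: "Ksp (sc v KK)" using Ksp_sc Ksp_KK by blast+
  have I: "sc u KK \<inter> sc v KK = {0}"
  proof (intro subset_antisym subsetI)
    fix x assume x: "x \<in> sc u KK \<inter> sc v KK"
    then obtain k1 k2 where k: "k1 \<in> KK" "k2 \<in> KK" "x = k1 * u" "x = k2 * v" unfolding sc_def by auto
    show "x \<in> {0}"
    proof (rule ccontr)
      assume "x \<notin> {0}"
      hence k1: "k1 \<noteq> 0" using k by auto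
      have "u * inverse v = k2 * inverse k1"
      proof -
        have "k1 * u = k2 * v" using k by simp
        thus ?thesis using k1 v by (simp add: field_simps)
      qed
      thus False using w KK_mult[OF k(2) KK_inv[OF k(1)]] by simp
    qed
  next
    fix x :: 'a assume "x \<in> {0}"
    thus "x \<in> sc u KK \<inter> sc v KK" using U V unfolding Ksp_def by auto
  qed
  have "card (ssum (sc u KK) (sc v KK)) * card (sc u KK \<inter> sc v KK) = card (sc u KK) * card (sc v KK)"
    by (rule card_ssum_inter) (use U V Ksp_add Ksp_neg in auto)
  hence "card (ssum (sc u KK) (sc v KK)) = QQ * QQ"
    using I card_sc[OF u] card_sc[OF v] card_K by simp
  also have "QQ * QQ = q ^ (2 * m)" by (simp add: QQ_def power_add mult_2)
  finally have "card (ssum (sc u KK) (sc v KK)) = q ^ (2 * m)" .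
  hence "sdim q (ssum (sc u KK) (sc v KK)) = 2 * m" by (rule sdim_eq)
  moreover have "sdim q (sc u KK \<inter> sc v KK) = 0" using I by (intro sdim_eq) simp
  ultimately show ?thesis unfolding subspace_dist_def by simp
qed

lemma dist_W:
  assumes s2: "s \<ge> 2" and u: "u \<noteq> 0" and v: "v \<noteq> 0" and w: "u * inverse v \<notin> KK"
  shows "subspace_dist q (sc u W) (sc v W) = 2 * m"
proof -
  have U: "Ksp (sc u W)" and V: "Ksp (sc v W)" using Ksp_sc Ksp_P by blast+
  have cU: "card (sc u W) = QQ ^ (s - 1)" and cV: "card (sc v W) = QQ ^ (s - 1)"
    using card_sc[OF u] card_sc[OF v] card_W by simp_all
  have ne: "sc u W \<noteq> sc v W" by (rule W_ne[OF s2 u v w])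
  have "\<exists>z\<in>sc v W. z \<notin> sc u W"
  proof (rule ccontr)
    assume "\<not> ?thesis"
    hence "sc v W \<subseteq> sc u W" by blast
    hence "sc v W = sc u W" using cU cV by (intro card_subset_eq) auto
    thus False using ne by simp
  qed
  then obtain z where z: "z \<in> sc v W" "z \<notin> sc u W" by blast
  have sub1: "ssum (sc u W) (sc z KK) \<subseteq> ssum (sc u W) (sc v W)"
  proof
    fix x assume "x \<in> ssum (sc u W) (sc z KK)"
    then obtain y k where "y \<in> sc u W" "k \<in> KK" "x = y + k * z" unfolding ssum_def sc_def by auto
    moreover have "k * z \<in> sc v W" using Ksp_smul[OF V] calculation z by blast
    ultimately show "x \<in> ssum (sc u W) (sc v W)" unfolding ssum_def by blast
  qed
  have "card (ssum (sc u W) (sc z KK)) = QQ ^ (s - 1) * QQ" using ssum_Kz[OF U z(2)] cU by simp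
  also have "\<dots> = QQ ^ s" using s2 by (metis Suc_diff_le le_trans one_le_numeral diff_Suc_1 power_Suc Suc_1 mult.commute)
  finally have "card (ssum (sc u W) (sc v W)) \<ge> card (UNIV :: 'a set)"
    using card_mono[OF _ sub1] card_UNIV' by simp
  hence S: "ssum (sc u W) (sc v W) = UNIV"
    by (metis card_seteq finite_UNIV subset_UNIV)
  have "card (ssum (sc u W) (sc v W)) * card (sc u W \<inter> sc v W) = card (sc u W) * card (sc v W)"
    by (rule card_ssum_inter) (use U V Ksp_add Ksp_neg in auto)
  hence "QQ ^ s * card (sc u W \<inter> sc v W) = QQ ^ (s - 1) * QQ ^ (s - 1)"
    using S cU cV card_UNIV' by simp
  moreover have "QQ ^ s * QQ ^ (s - 2) = QQ ^ (s - 1) * QQ ^ (s - 1)"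
  proof -
    have "s + (s - 2) = (s - 1) + (s - 1)" using s2 by simp
    thus ?thesis by (metis power_add)
  qed
  ultimately have "QQ ^ s * card (sc u W \<inter> sc v W) = QQ ^ s * QQ ^ (s - 2)" by simp
  hence "card (sc u W \<inter> sc v W) = QQ ^ (s - 2)" using QQ2 by simp
  hence "sdim q (sc u W \<inter> sc v W) = m * (s - 2)" by (intro sdim_eq) (simp add: QQ_pow)
  moreover have "sdim q (ssum (sc u W) (sc v W)) = n" using S cardU by (intro sdim_eq) simp
  moreover have "m * 2 \<le> m * s" using s2 by (rule mult_le_mono2)
  ultimately show ?thesis unfolding subspace_dist_def using s2 n_eq
    by (simp add: diff_mult_distrib2)
qed



lemma TT2: "s \<ge> 2 \<Longrightarrow> TT \<ge> 2"
proof (rule ccontr)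
  assume s2: "s \<ge> 2" and "\<not> TT \<ge> 2"
  hence "TT = 1" using T_pos by simp
  hence "QQ - 1 = NN" using T_eq by simp
  hence "QQ = q ^ n" using QQ2 NN_pos unfolding NN_def by simp
  hence "QQ = QQ ^ s" using card_UNIV' cardU by simp
  moreover have "QQ ^ 1 < QQ ^ s" using QQ2 s2 by (intro power_strict_increasing) auto
  ultimately show False by simp
qed

lemma a_notK: "s \<ge> 2 \<Longrightarrow> a \<notin> KK"
  using Kmem[of 1] TT2 by (simp add: nat_dvd_1_iff_1)

lemma codeword_eq:
  assumes "\<forall>V\<in>set G. Kcl V" "u * inverse v \<in> KK" "u \<noteq> 0" "v \<noteq> 0"
  shows "map (sc u) G = map (sc v) G"
proof (rule map_cong[OF refl])
  fix V assume "V \<in> set G"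
  have e: "(u * inverse v) * v = u" using assms by (simp add: mult.assoc)
  have "sc ((u * inverse v) * v) V = sc v V" using assms \<open>V \<in> set G\<close> by (intro scale_K) auto
  thus "sc u V = sc v V" unfolding e .
qed

abbreviation "F2 \<equiv> [P 1, W]"

lemma F2_Kcl: "\<forall>V\<in>set F2. Kcl V" using Ksp_P unfolding Ksp_def by auto

lemma F2_dist:
  assumes s2: "s \<ge> 2" and G: "G \<in> Orb a F2" and H: "H \<in> Orb a F2" and ne: "G \<noteq> H"
  shows "flag_dist q G H = 4 * m"
proof -
  obtain i where i: "G = map (sc (a ^ i)) F2" using G unfolding Orb_sc by blast
  obtain j where j: "H = map (sc (a ^ j)) F2" using H unfolding Orb_sc by blast
  have u: "a ^ i \<noteq> 0" and v: "a ^ j \<noteq> 0" using a_nz by auto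
  have w: "a ^ i * inverse (a ^ j) \<notin> KK"
    using codeword_eq[OF F2_Kcl _ u v] ne i j by blast
  have "flag_dist q G H = subspace_dist q (G ! 0) (H ! 0) + subspace_dist q (G ! 1) (H ! 1)"
    unfolding flag_dist_def using i by (simp add: numeral_2_eq_2)
  also have "\<dots> = 2 * m + 2 * m" using i j dist_K[OF u v w] dist_W[OF s2 u v w] P_1 by simp
  finally show ?thesis by simp
qed

lemma F2_distinct: "s \<ge> 2 \<Longrightarrow> map (sc (a ^ 0)) F2 \<noteq> map (sc (a ^ 1)) F2"
proof
  assume s2: "s \<ge> 2" and "map (sc (a ^ 0)) F2 = map (sc (a ^ 1)) F2"
  hence "sc 1 KK = sc a KK" using P_1 by simp
  moreover have "1 \<in> sc 1 KK" using KK_1 unfolding sc_def by force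
  ultimately have "1 \<in> sc a KK" by simp
  then obtain k where k: "k \<in> KK" "1 = k * a" unfolding sc_def by auto
  hence "k \<noteq> 0" by auto
  hence "a = inverse k" using k by (simp add: field_simps)
  thus False using a_notK[OF s2] KK_inv[OF k(1)] by simp
qed

lemma F2_min_dist: "s \<ge> 2 \<Longrightarrow> min_dist q (Orb a F2) = 4 * m"
proof -
  assume s2: "s \<ge> 2"
  have "{flag_dist q G H | G H. G \<in> Orb a F2 \<and> H \<in> Orb a F2 \<and> G \<noteq> H} = {4 * m}"
  proof (intro subset_antisym subsetI)
    fix x assume "x \<in> {flag_dist q G H | G H. G \<in> Orb a F2 \<and> H \<in> Orb a F2 \<and> G \<noteq> H}"
    thus "x \<in> {4 * m}" using F2_dist[OF s2] by auto
  next
    fix x assume x: "x \<in> {4 * m}"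
    let ?G = "map (sc (a ^ 0)) F2" and ?H = "map (sc (a ^ 1)) F2"
    have "?G \<in> Orb a F2" "?H \<in> Orb a F2" unfolding Orb_sc by blast+
    moreover have "?G \<noteq> ?H" by (rule F2_distinct[OF s2])
    ultimately have "flag_dist q ?G ?H = 4 * m" using F2_dist[OF s2] by blast
    hence "x = flag_dist q ?G ?H" using x by simp
    thus "x \<in> {flag_dist q G H | G H. G \<in> Orb a F2 \<and> H \<in> Orb a F2 \<and> G \<noteq> H}"
      using x \<open>?G \<in> Orb a F2\<close> \<open>?H \<in> Orb a F2\<close> \<open>?G \<noteq> ?H\<close> by blast
  qed
  thus ?thesis unfolding min_dist_def by simp
qed

lemma F2_card: "card (Orb a F2) = TT"
proof -
  have eq: "Orb a F2 = (\<lambda>j. map (sc (a ^ j)) F2) ` {..<TT}"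
    using Orb_sub[OF F2_Kcl] unfolding Orb_sc by blast
  have lt: "False" if ij: "j < i" "i < TT" "map (sc (a ^ i)) F2 = map (sc (a ^ j)) F2" for i j
  proof -
    have "sc (a ^ i) KK = sc (a ^ j) KK" using ij(3) P_1 by simp
    moreover have "a ^ i \<in> sc (a ^ i) KK" using KK_1 unfolding sc_def by force
    ultimately have "a ^ i \<in> sc (a ^ j) KK" by simp
    then obtain k where k: "k \<in> KK" "a ^ i = k * a ^ j" unfolding sc_def by auto
    have "a ^ i = a ^ (i - j) * a ^ j" using ij(1) by (simp flip: power_add)
    hence "a ^ (i - j) = k" using k a_nz by simp
    hence "a ^ (i - j) \<in> KK" using k by simp
    hence "TT dvd (i - j)" using Kmem by simp
    moreover have "0 < i - j" "i - j < TT" using ij by auto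
    ultimately show False by (simp add: nat_dvd_not_less)
  qed
  have "inj_on (\<lambda>j. map (sc (a ^ j)) F2) {..<TT}"
  proof (rule inj_onI)
    fix i j assume "i \<in> {..<TT}" "j \<in> {..<TT}" "map (sc (a ^ i)) F2 = map (sc (a ^ j)) F2"
    thus "i = j" using lt[of j i] lt[of i j] by (cases i j rule: linorder_cases) auto
  qed
  thus ?thesis unfolding eq by (simp add: card_image)
qed

lemma F2_bf: "best_friend (Fsub q m) F2"
  unfolding best_friend_def
proof (intro conjI allI impI)
  show "is_subfield (Fsub q m :: 'a set)" by (rule K_sub)
  show "\<forall>V\<in>set F2. \<forall>k\<in>Fsub q m. \<forall>v\<in>V. k * v \<in> V" using P_smul KK_def by auto
  fix K' assume K': "is_subfield K' \<and> (\<forall>V\<in>set F2. \<forall>k\<in>K'. \<forall>v\<in>V. k * v \<in> V)"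
  show "K' \<subseteq> Fsub q m" unfolding KK_def[symmetric]
  proof
    fix k assume "k \<in> K'"
    moreover have "\<forall>k\<in>K'. \<forall>v\<in>KK. k * v \<in> KK" using K' P_1 by simp
    ultimately have "k * 1 \<in> KK" using KK_1 by blast
    thus "k \<in> KK" by simp
  qed
qed

lemma bf_le: "best_friend (Fsub q m) G \<Longrightarrow> card (Orb a G) \<le> TT"
proof -
  assume "best_friend (Fsub q m) G"
  hence "\<forall>V\<in>set G. Kcl V" unfolding best_friend_def Kcl_def KK_def by blast
  thus ?thesis by (rule Orb_card_le)
qed

lemma F2_type: "s \<ge> 2 \<Longrightarrow> G \<in> Orb a F2 \<Longrightarrow> flag_type q G = [m, n - m]"
proof -
  assume s2: "s \<ge> 2" and "G \<in> Orb a F2"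
  then obtain i where i: "G = map (sc (a ^ i)) F2" unfolding Orb_sc by blast
  have u: "a ^ i \<noteq> 0" using a_nz by simp
  have "sdim q (sc (a ^ i) KK) = m" using card_sc[OF u] card_K by (intro sdim_eq) (simp add: QQ_def)
  moreover have "sdim q (sc (a ^ i) W) = n - m"
  proof (rule sdim_eq)
    have "n - m = m * (s - 1)" using n_eq by (simp add: diff_mult_distrib2)
    thus "card (sc (a ^ i) W) = q ^ (n - m)" using card_sc[OF u] card_W QQ_pow by simp
  qed
  ultimately show ?thesis unfolding flag_type_def i using P_1 by simp
qed

lemma odfc: "s \<ge> 2 \<Longrightarrow> odfc_bound n [m, n - m] = 4 * m"
proof -
  assume s2: "s \<ge> 2"
  have le: "m * 2 \<le> n" using n_eq s2 by (metis mult_le_mono2)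
  have d: "2 * (n div 2) \<le> n" "n \<le> 2 * (n div 2) + 1" by linarith+
  have "m \<le> n div 2" using le d by linarith
  moreover have "(if n - m \<le> n div 2 then n - m else n - (n - m)) = m" using le d by auto
  ultimately show ?thesis unfolding odfc_bound_def by simp
qed

end



lemma sorted_bnd:
  assumes "sorted_wrt (<) (ss :: nat list)" "x \<in> set ss"
  shows "ss ! 0 \<le> x \<and> x \<le> last ss"
proof -
  obtain i where i: "i < length ss" "x = ss ! i" using assms(2) by (auto simp: in_set_conv_nth)
  have ne: "ss \<noteq> []" using assms(2) by auto
  have "ss ! 0 \<le> ss ! i"
    using sorted_wrt_nth_less[OF assms(1), of 0 i] i by (cases i) auto
  moreover have "ss ! i \<le> ss ! (length ss - 1)"
  proof (cases "i = length ss - 1")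
    case False
    hence "i < length ss - 1" using i by simp
    moreover have "length ss - 1 < length ss" using i by simp
    ultimately show ?thesis using sorted_wrt_nth_less[OF assms(1), of i "length ss - 1"] by simp
  qed simp
  ultimately show ?thesis using i ne by (simp add: last_conv_nth)
qed

context fset begin

lemma part1:
  assumes len: "length ss \<ge> 2" and sorted: "sorted_wrt (<) ss" and h0: "ss ! 0 \<ge> 1" and hl: "last ss < s"
  shows "is_flag q (map P ss)" and "gen_galois_flag q (map P ss) \<longleftrightarrow> ss ! 0 = 1"
proof -
  have ne: "ss \<noteq> []" using len by auto
  have bnd: "1 \<le> x \<and> x < s" if "x \<in> set ss" for x
    using sorted_bnd[OF sorted that] h0 hl by auto
  have "ss ! 1 \<in> set ss" using len by simp
  moreover have "ss ! 0 < ss ! 1" using sorted_wrt_nth_less[OF sorted, of 0 1] len by simp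
  ultimately have l2: "last ss \<ge> 2" using sorted_bnd[OF sorted] h0 by fastforce
  have hdP: "hd (map P ss) = P (ss ! 0)" using ne by (simp add: hd_map hd_conv_nth)
  have lastP: "last (map P ss) = P (last ss)" using ne by (simp add: last_map)
  have lin: "last ss \<in> set ss" using ne by simp
  show fl: "is_flag q (map P ss)"
    unfolding is_flag_def
  proof (intro conjI)
    show "map P ss \<noteq> []" using ne by simp
    show "\<forall>V\<in>set (map P ss). is_subspace q V" using P_subspace by auto
    have "1 \<in> P (ss ! 0)" using P_1_mem h0 by simp
    moreover have s1: "{0} \<subseteq> P (ss ! 0)" using P_0 by simp
    moreover have "{0} \<noteq> P (ss ! 0)"
    proof
      assume "{0} = P (ss ! 0)"
      with \<open>1 \<in> P (ss ! 0)\<close> have "(1::'a) \<in> {0}" by simp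
      thus False by simp
    qed
    ultimately show "{0} \<subset> hd (map P ss)" unfolding hdP by (simp add: psubset_eq)
    have "b ^ (last ss) \<notin> P (last ss)" using P_notin hl by simp
    thus "last (map P ss) \<subset> UNIV" unfolding lastP by auto
    show "sorted_wrt (\<subset>) (map P ss)"
      unfolding sorted_wrt_map
    proof (rule sorted_wrt_mono_rel[OF _ sorted])
      fix x y assume x: "x \<in> set ss" and y: "y \<in> set ss" and xy: "x < y"
      have "P x \<subseteq> P y" using P_mono xy by simp
      moreover have "b ^ x \<in> P y" using P_pow xy by simp
      moreover have "b ^ x \<notin> P x" using P_notin bnd[OF x] by simp
      ultimately show "P x \<subset> P y" by blast
    qed
  qed
  have sf: "is_subfield (P x) \<longleftrightarrow> x = 1" if "x \<in> set ss" for x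
    using P_sub_iff bnd[OF that] by blast
  show "gen_galois_flag q (map P ss) \<longleftrightarrow> ss ! 0 = 1"
  proof
    assume "gen_galois_flag q (map P ss)"
    then obtain x where "x \<in> set ss" "is_subfield (P x)" unfolding gen_galois_flag_def by auto
    hence "x = 1" "x \<in> set ss" using sf by auto
    thus "ss ! 0 = 1" using sorted_bnd[OF sorted] h0 by fastforce
  next
    assume e: "ss ! 0 = 1"
    have "ss ! 0 \<in> set ss" using ne by simp
    hence "\<exists>V\<in>set (map P ss). is_subfield V" using sf e by force
    moreover have "\<exists>V\<in>set (map P ss). \<not> is_subfield V" using sf[OF lin] l2 lin by force
    moreover have "\<forall>U\<in>set (map P ss). \<forall>V\<in>set (map P ss). is_subfield U \<and> is_subfield V \<longrightarrow> U \<subseteq> V \<or> V \<subseteq> U"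
      using sf by auto
    ultimately show "gen_galois_flag q (map P ss)" unfolding gen_galois_flag_def using fl by blast
  qed
qed

end
theorem mainTheorem7:
  fixes a :: "'a::{finite,field}" and q n m l r :: nat and ss :: "nat list"
  assumes "prime_power q" and "n > 0" and "m > 0" and "m dvd n" and "card (UNIV::'a set) = q ^ n"
    and "primitive_elem a"
    and "1 \<le> l" and "l < (q ^ n - 1) div (q ^ m - 1)"
    and "length ss = r" and "r \<ge> 2" and "ss ! 0 \<ge> 1" and "sorted_wrt (<) ss" and "last ss < n div m"
    and "minpoly_degree (Fsub q m) (a ^ l) = n div m"
  shows "(gen_galois_flag q (the_flag q m a l ss) \<longleftrightarrow> ss ! 0 = 1)
    \<and> (r = 2 \<and> ss ! 0 = 1 \<and> ss ! 1 = minpoly_degree (Fsub q m) (a ^ l) - 1 \<longrightarrow>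
         gen_galois_flag q (the_flag q m a l ss)
       \<and> optimum_distance_flag_code q n (Orb a (the_flag q m a l ss)) [m, n - m]
       \<and> min_dist q (Orb a (the_flag q m a l ss)) = 4 * m
       \<and> card (Orb a (the_flag q m a l ss)) = (q ^ n - 1) div (q ^ m - 1)
       \<and> best_friend (Fsub q m) (the_flag q m a l ss)
       \<and> (\<forall>G::'a set list. is_flag q G \<and> best_friend (Fsub q m) G \<longrightarrow>
            card (Orb a G) \<le> (q ^ n - 1) div (q ^ m - 1)))"
proof -
  have loc: "fset a q n m l" unfolding fset_def using assms by auto
  interpret fset a q n m l by (rule loc)
  have tf: "the_flag q m a l ss = map (pow_span (Fsub q m) a l) ss" unfolding the_flag_def ..
  have len: "length ss \<ge> 2" using assms by simp
  have srt: "sorted_wrt (<) ss" and h0: "ss ! 0 \<ge> 1" and hl: "last ss < n div m" using assms by auto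
  have ne: "ss \<noteq> []" using len by auto
  have "ss ! 1 \<in> set ss" using len by simp
  hence "ss ! 1 \<le> last ss" using sorted_bnd[OF srt] by blast
  moreover have "ss ! 0 < ss ! 1" using sorted_wrt_nth_less[OF srt, of 0 1] len by simp
  ultimately have s2: "n div m \<ge> 2" using h0 hl by linarith
  note p1 = part1[OF len srt h0 hl]
  show ?thesis
  proof (intro conjI impI)
    show "gen_galois_flag q (the_flag q m a l ss) \<longleftrightarrow> ss ! 0 = 1" unfolding tf by (rule p1(2))
  next
    assume h: "r = 2 \<and> ss ! 0 = 1 \<and> ss ! 1 = minpoly_degree (Fsub q m) (a ^ l) - 1"
    have "length ss = 2" using h assms by simp
    then obtain x y where xy: "ss = [x, y]" by (auto simp: numeral_2_eq_2 length_Suc_conv)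
    have "x = 1" "y = n div m - 1" using h xy assms by auto
    hence F: "the_flag q m a l ss = [pow_span (Fsub q m) a l 1, pow_span (Fsub q m) a l (n div m - 1)]"
      using \<open>x = 1\<close> \<open>y = n div m - 1\<close> unfolding the_flag_def xy by simp
    show "gen_galois_flag q (the_flag q m a l ss)" unfolding tf using p1(2) h by simp
    show "optimum_distance_flag_code q n (Orb a (the_flag q m a l ss)) [m, n - m]"
      unfolding optimum_distance_flag_code_def F using F2_type[OF s2] F2_min_dist[OF s2] odfc[OF s2] by auto
    show "min_dist q (Orb a (the_flag q m a l ss)) = 4 * m" unfolding F by (rule F2_min_dist[OF s2])
    show "card (Orb a (the_flag q m a l ss)) = (q ^ n - 1) div (q ^ m - 1)"
      unfolding F F2_card TT_def NN_def QQ_def ..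
    show "best_friend (Fsub q m) (the_flag q m a l ss)" unfolding F by (rule F2_bf)
    show "\<forall>G::'a set list. is_flag q G \<and> best_friend (Fsub q m) G \<longrightarrow>
            card (Orb a G) \<le> (q ^ n - 1) div (q ^ m - 1)"
      using bf_le unfolding TT_def NN_def QQ_def by blast
  qed
qed


end
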